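(* Let $p$ be an odd prime and let $O_2^+(\mathbb{F}_p)\subset GL_2(\mathbb{F}_p)$ be the group generated by $\xi=\begin{pmatrix}0&1\\1&0\end{pmatrix}$ and $\operatorname{diag}(c,c^{-1})$, $c\in\mathbb{F}_p^\times$ (the orthogonal group of the quadratic form $x_1x_2$, of order $2(p-1)$). It acts on $\mathbb{F}_p[x_1,x_2,y_1,y_2]$ by: $\xi$ swaps $x_1\leftrightarrow x_2$ and $y_1\leftrightarrow y_2$; $\operatorname{diag}(c,c^{-1})$ sends $x_1\mapsto cx_1,\ x_2\mapsto c^{-1}x_2,\ y_1\mapsto c^{-1}y_1,\ y_2\mapsto cy_2$. Then the invariant ring $\mathbb{F}_p[x_1,x_2,y_1,y_2]^{O_2^+(\mathbb{F}_p)}$ is generated as an $\mathbb{F}_p$-algebra by $$\{x_1x_2,\ y_1y_2,\ x_1y_1+x_2y_2,\ x_1^{p-1-i}y_2^i+x_2^{p-1-i}y_1^i \mid 0\le i\le p-1\}.$$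
   Context: This is the natural action on $\mathbb{F}_p[V\oplus V^*]$, $V=\mathbb{F}_p^2$: $x_1,x_2$ transform by $(x_1,x_2)^T\mapsto g(x_1,x_2)^T$ and $y_1,y_2$ by $(y_1,y_2)^T\mapsto (g^T)^{-1}(y_1,y_2)^T$, extended to $\mathbb{F}_p$-algebra automorphisms. *)

theory Defs
  imports "HOL-Library.Poly_Mapping" "HOL-Library.Cardinality" "HOL-Computational_Algebra.Primes"
begin

datatype var = X1 | X2 | Y1 | Y2

text \<open>Polynomials in x1,x2,y1,y2 over 'k: finitely supported maps from monomials
  (exponent vectors) to coefficients, with the convolution product of Poly_Mapping.\<close>
type_synonym 'k mpoly4 = "(var \<Rightarrow>\<^sub>0 nat) \<Rightarrow>\<^sub>0 'k"

definition Const :: "'k::comm_ring_1 \<Rightarrow> 'k mpoly4" where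
  "Const c = Poly_Mapping.single 0 c"

definition Var :: "var \<Rightarrow> 'k::comm_ring_1 mpoly4" where
  "Var v = Poly_Mapping.single (Poly_Mapping.single v 1) 1"

definition subst :: "(var \<Rightarrow> 'k::comm_ring_1 mpoly4) \<Rightarrow> 'k mpoly4 \<Rightarrow> 'k mpoly4" where
  "subst s P = (\<Sum>mon\<in>Poly_Mapping.keys P. Const (Poly_Mapping.lookup P mon) * (\<Prod>v\<in>Poly_Mapping.keys (mon :: var \<Rightarrow>\<^sub>0 nat). s v ^ Poly_Mapping.lookup mon v))"

text \<open>2x2 matrices (a,b,c,d) = [[a,b],[c,d]].\<close>
type_synonym 'k mat2 = "'k \<times> 'k \<times> 'k \<times> 'k"

fun m2mult :: "'k::comm_ring_1 mat2 \<Rightarrow> 'k mat2 \<Rightarrow> 'k mat2" where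
  "m2mult (a,b,c,d) (e,f,g,h) = (a*e+b*g, a*f+b*h, c*e+d*g, c*f+d*h)"

fun m2det :: "'k::comm_ring_1 mat2 \<Rightarrow> 'k" where
  "m2det (a,b,c,d) = a*d - b*c"

fun m2inv :: "'k::field mat2 \<Rightarrow> 'k mat2" where
  "m2inv (a,b,c,d) = (let D = a*d - b*c in (d/D, -b/D, -c/D, a/D))"

definition m2id :: "'k::comm_ring_1 mat2" where
  "m2id = (1,0,0,1)"

text \<open>Natural action of g on F[V + V*]: (x1,x2)^T \<mapsto> g (x1,x2)^T and
  (y1,y2)^T \<mapsto> (g^T)^{-1} (y1,y2)^T, extended to algebra automorphisms.\<close>
fun act_subst :: "'k::field mat2 \<Rightarrow> var \<Rightarrow> 'k mpoly4" where
  "act_subst (a,b,c,d) X1 = Const a * Var X1 + Const b * Var X2"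
| "act_subst (a,b,c,d) X2 = Const c * Var X1 + Const d * Var X2"
| "act_subst (a,b,c,d) Y1 = Const (d / (a*d-b*c)) * Var Y1 + Const (- c / (a*d-b*c)) * Var Y2"
| "act_subst (a,b,c,d) Y2 = Const (- b / (a*d-b*c)) * Var Y1 + Const (a / (a*d-b*c)) * Var Y2"

definition act :: "'k::field mat2 \<Rightarrow> 'k mpoly4 \<Rightarrow> 'k mpoly4" where
  "act g P = subst (act_subst g) P"

definition O2_gens :: "'k::field mat2 set" where
  "O2_gens = {(0,1,1,0)} \<union> {(c,0,0,inverse c) | c. c \<noteq> 0}"

inductive_set gen_group :: "'k::field mat2 set \<Rightarrow> 'k mat2 set" for S where
  gg_id: "m2id \<in> gen_group S"
| gg_mult: "s \<in> S \<Longrightarrow> g \<in> gen_group S \<Longrightarrow> m2mult s g \<in> gen_group S"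
| gg_inv: "s \<in> S \<Longrightarrow> g \<in> gen_group S \<Longrightarrow> m2mult (m2inv s) g \<in> gen_group S"

definition O2plus :: "'k::field mat2 set" where
  "O2plus = gen_group O2_gens"

inductive_set gen_alg :: "'k::comm_ring_1 mpoly4 set \<Rightarrow> 'k mpoly4 set" for G where
  ga_const: "Const c \<in> gen_alg G"
| ga_gen: "f \<in> G \<Longrightarrow> f \<in> gen_alg G"
| ga_add: "f \<in> gen_alg G \<Longrightarrow> h \<in> gen_alg G \<Longrightarrow> f + h \<in> gen_alg G"
| ga_mult: "f \<in> gen_alg G \<Longrightarrow> h \<in> gen_alg G \<Longrightarrow> f * h \<in> gen_alg G"

end

theory Submission
  imports Defs "HOL-Computational_Algebra.Polynomial"
begin


lemma poly_sum_single: "(\<Sum>m\<in>Poly_Mapping.keys (P::'a \<Rightarrow>\<^sub>0 'b::comm_monoid_add). Poly_Mapping.single m (Poly_Mapping.lookup P m)) = P"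
proof (rule poly_mapping_eqI)
  fix k
  show "Poly_Mapping.lookup (\<Sum>m\<in>Poly_Mapping.keys P. Poly_Mapping.single m (Poly_Mapping.lookup P m)) k = Poly_Mapping.lookup P k"
    by (simp add: lookup_sum lookup_single when_def in_keys_iff)
qed

lemma Const_0[simp]: "Const 0 = 0" by (simp add: Const_def)
lemma Const_1[simp]: "Const 1 = 1" by (simp add: Const_def)
lemma Const_add: "Const (a + b) = Const a + Const b" by (simp add: Const_def single_add)
lemma Const_mult: "Const (a * b) = Const a * Const b" by (simp add: Const_def mult_single)
lemma Const_uminus: "Const (- a) = - Const a" by (simp add: Const_def single_uminus)
lemma Const_power: "Const (a ^ n) = Const a ^ n"
  by (induct n) (simp_all add: Const_mult)
lemma Const_mult_single: "Const a * Poly_Mapping.single m b = Poly_Mapping.single m (a * b)"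
  by (simp add: Const_def mult_single)

definition T :: "(var \<Rightarrow> 'k::comm_ring_1 mpoly4) \<Rightarrow> (var \<Rightarrow>\<^sub>0 nat) \<Rightarrow> 'k mpoly4" where
  "T s mon = (\<Prod>v\<in>Poly_Mapping.keys mon. s v ^ Poly_Mapping.lookup mon v)"

lemma UNIV_var: "(UNIV :: var set) = {X1, X2, Y1, Y2}"
  using var.exhaust by auto

lemma T_explicit: "T s mon = s X1 ^ Poly_Mapping.lookup mon X1 * s X2 ^ Poly_Mapping.lookup mon X2
   * s Y1 ^ Poly_Mapping.lookup mon Y1 * s Y2 ^ Poly_Mapping.lookup mon Y2"
proof -
  have "T s mon = (\<Prod>v\<in>{X1,X2,Y1,Y2}. s v ^ Poly_Mapping.lookup mon v)"
    unfolding T_def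
    apply (rule prod.mono_neutral_left)
      apply simp
     apply (auto simp: in_keys_iff)
    subgoal for x by (cases x) auto
    done
  then show ?thesis by (simp add: mult.assoc)
qed

lemma T_add: "T s (m + n) = T s m * T s n"
  by (simp add: T_explicit lookup_add power_add algebra_simps)

lemma T_zero: "T s 0 = 1" by (simp add: T_def)

lemma subst_superset:
  assumes "finite F" "Poly_Mapping.keys P \<subseteq> F"
  shows "subst s P = (\<Sum>mon\<in>F. Const (Poly_Mapping.lookup P mon) * T s mon)"
  unfolding subst_def T_def[symmetric]
  by (rule sum.mono_neutral_left) (use assms in \<open>auto simp: in_keys_iff\<close>)

lemma subst_add: "subst s (P + Q) = subst s P + subst s Q"
proof -
  let ?F = "Poly_Mapping.keys P \<union> Poly_Mapping.keys Q"
  have f: "finite ?F" by simp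
  have "subst s (P + Q) = (\<Sum>mon\<in>?F. Const (Poly_Mapping.lookup (P+Q) mon) * T s mon)"
    by (rule subst_superset[OF f]) (rule keys_add)
  also have "\<dots> = (\<Sum>mon\<in>?F. Const (Poly_Mapping.lookup P mon) * T s mon) + (\<Sum>mon\<in>?F. Const (Poly_Mapping.lookup Q mon) * T s mon)"
    by (simp add: lookup_add Const_add distrib_right sum.distrib)
  also have "\<dots> = subst s P + subst s Q"
    by (simp add: subst_superset[OF f])
  finally show ?thesis .
qed

lemma subst_zero: "subst s 0 = 0" by (simp add: subst_def)

lemma subst_sum: "subst s (\<Sum>i\<in>I. f i) = (\<Sum>i\<in>I. subst s (f i))"
  by (induct I rule: infinite_finite_induct) (simp_all add: subst_zero subst_add)

lemma subst_single: "subst s (Poly_Mapping.single k a) = Const a * T s k"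
  by (cases "a = 0") (simp_all add: subst_def T_def)

lemma subst_mult: "subst s (P * Q) = subst s P * subst s Q"
proof -
  have "P * Q = (\<Sum>m\<in>Poly_Mapping.keys P. Poly_Mapping.single m (Poly_Mapping.lookup P m)) *
     (\<Sum>n\<in>Poly_Mapping.keys Q. Poly_Mapping.single n (Poly_Mapping.lookup Q n))"
    by (simp add: poly_sum_single)
  also have "\<dots> = (\<Sum>m\<in>Poly_Mapping.keys P. \<Sum>n\<in>Poly_Mapping.keys Q. Poly_Mapping.single (m+n) (Poly_Mapping.lookup P m * Poly_Mapping.lookup Q n))"
    by (simp add: sum_distrib_left sum_distrib_right mult_single sum.swap[of _ "Poly_Mapping.keys Q"])
  finally have e: "P * Q = \<dots>" .
  have "subst s (P * Q) = (\<Sum>m\<in>Poly_Mapping.keys P. \<Sum>n\<in>Poly_Mapping.keys Q. (Const (Poly_Mapping.lookup P m) * T s m) * (Const (Poly_Mapping.lookup Q n) * T s n))"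
    unfolding e subst_sum subst_single T_add Const_mult by (simp add: ac_simps)
  also have "\<dots> = subst s P * subst s Q"
    by (simp add: subst_def T_def[symmetric] sum_distrib_left sum_distrib_right; rule sum.swap)
  finally show ?thesis .
qed

lemma subst_Const: "subst s (Const c) = Const c"
  by (simp add: Const_def subst_single T_zero)

lemma subst_Var: "subst s (Var v) = s v"
  by (simp add: Var_def subst_single T_def)

lemma subst_power: "subst s (P ^ n) = subst s P ^ n"
  by (induct n) (simp_all add: subst_mult flip: Const_1 add: subst_Const)

lemma subst_diff: "subst s (P - Q) = subst s P - subst s Q"
  by (metis add_diff_cancel_right' diff_add_cancel subst_add)

lemma Var_power: "Var v ^ k = Poly_Mapping.single (Poly_Mapping.single v k) 1"
  by (induct k) (simp_all add: Var_def mult_single flip: single_add)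

lemma mono_single: "Poly_Mapping.single m (1::'k::comm_ring_1) = Var X1 ^ Poly_Mapping.lookup m X1 * Var X2 ^ Poly_Mapping.lookup m X2 *
   Var Y1 ^ Poly_Mapping.lookup m Y1 * Var Y2 ^ Poly_Mapping.lookup m Y2"
proof -
  have "m = Poly_Mapping.single X1 (Poly_Mapping.lookup m X1) + Poly_Mapping.single X2 (Poly_Mapping.lookup m X2) +
    Poly_Mapping.single Y1 (Poly_Mapping.lookup m Y1) + Poly_Mapping.single Y2 (Poly_Mapping.lookup m Y2)"
    by (rule poly_mapping_eqI, case_tac k) (simp_all add: lookup_add lookup_single)
  then show ?thesis
    by (simp add: Var_power mult_single)
qed




lemma card_zero_field: "of_nat CARD('k::{field,finite}) = (0::'k)"
proof -
  have "(\<Sum>x\<in>UNIV. x) = (\<Sum>x\<in>UNIV. x + (1::'k))"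
  proof -
    have "bij (\<lambda>x::'k. x + 1)" by (rule bijI) (auto simp: inj_def intro: range_eqI[of _ _ "_ - 1"])
    from sum.reindex_bij_betw[OF this, of "\<lambda>x. x"] show ?thesis by simp
  qed
  moreover have "(\<Sum>x\<in>UNIV. x + (1::'k)) = (\<Sum>x\<in>UNIV. x) + of_nat CARD('k)"
    by (simp add: sum.distrib)
  ultimately show ?thesis by simp
qed

lemma two_ne_zero_field:
  assumes "odd CARD('k::{field,finite})"
  shows "(2::'k) \<noteq> 0"
proof
  assume h: "(2::'k) = 0"
  obtain k where k: "CARD('k) = 2 * k + 1" using assms oddE by blast
  have "(0::'k) = of_nat (2*k+1)" using card_zero_field[where 'k='k] k by simp
  also have "\<dots> = 1" using h by simp
  finally show False by simp
qed

lemma pow_card_minus_one: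
  assumes "(c::'k::{field,finite}) \<noteq> 0"
  shows "c ^ (CARD('k) - 1) = 1"
proof -
  let ?U = "UNIV - {0::'k}"
  have bij: "bij_betw (\<lambda>x. c * x) ?U ?U"
    unfolding bij_betw_def inj_on_def using assms
    by (auto intro!: image_eqI[of _ _ "x / c" for x])
  have "(\<Prod>x\<in>?U. x) = (\<Prod>x\<in>?U. c * x)"
    using prod.reindex_bij_betw[OF bij, of "\<lambda>x. x"] by simp
  also have "\<dots> = c ^ card ?U * (\<Prod>x\<in>?U. x)"
    by (simp add: prod.distrib)
  finally have "(\<Prod>x\<in>?U. x) = c ^ card ?U * (\<Prod>x\<in>?U. x)" .
  moreover have "(\<Prod>x\<in>?U. x) \<noteq> 0" by simp
  ultimately have "c ^ card ?U = 1" by simp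
  moreover have "card ?U = CARD('k) - 1" by (simp add: card_Diff_singleton)
  ultimately show ?thesis by simp
qed

lemma card_field_ge2: "2 \<le> CARD('k::{field,finite})"
proof -
  have "card {0::'k, 1} \<le> CARD('k)" by (rule card_mono) simp_all
  then show ?thesis by simp
qed

lemma pow_all_one_dvd:
  assumes "\<And>c::'k::{field,finite}. c \<noteq> 0 \<Longrightarrow> c ^ e = 1"
  shows "(CARD('k) - 1) dvd e"
proof (rule ccontr)
  let ?q = "CARD('k) - 1"
  assume nd: "\<not> ?q dvd e"
  define r where "r = e mod ?q"
  have r0: "r \<noteq> 0" using nd by (simp add: r_def mod_eq_0_iff_dvd)
  have rq: "r < ?q" unfolding r_def using card_field_ge2[where 'k='k] by (intro mod_less_divisor) simp
  have root: "c ^ r = 1" if "c \<noteq> 0" for c :: 'k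
  proof -
    have "e = ?q * (e div ?q) + r" by (simp add: r_def)
    then have "c ^ e = c ^ (?q * (e div ?q)) * c ^ r" by (metis power_add)
    also have "\<dots> = (c ^ ?q) ^ (e div ?q) * c ^ r" by (simp add: power_mult)
    finally have "c ^ e = (c ^ ?q) ^ (e div ?q) * c ^ r" .
    then show ?thesis using assms[OF that] pow_card_minus_one[OF that] by simp
  qed
  define p :: "'k poly" where "p = monom 1 r - 1"
  have p0: "p \<noteq> 0"
  proof
    assume "p = 0"
    then have "poly p 0 = 0" by simp
    then show False using r0 by (simp add: p_def poly_monom power_0_left)
  qed
  have dp: "degree p \<le> r"
    unfolding p_def by (rule order.trans[OF degree_diff_le_max]) (simp add: degree_monom_le)
  have sub: "UNIV - {0} \<subseteq> {x. poly p x = 0}"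
    using root by (auto simp: p_def poly_monom)
  have "card (UNIV - {0::'k}) \<le> card {x. poly p x = 0}"
    by (rule card_mono[OF _ sub]) simp
  also have "\<dots> \<le> degree p" by (rule card_poly_roots_bound[OF p0])
  finally have "card (UNIV - {0::'k}) \<le> degree p" .
  moreover have "card (UNIV - {0::'k}) = ?q" by (simp add: card_Diff_singleton)
  ultimately have "?q \<le> r" using dp by linarith
  then show False using rq by simp
qed




definition mono :: "nat \<Rightarrow> nat \<Rightarrow> nat \<Rightarrow> nat \<Rightarrow> 'k::comm_ring_1 mpoly4" where
  "mono a b c d = Var X1 ^ a * Var X2 ^ b * Var Y1 ^ c * Var Y2 ^ d"

definition symm :: "nat \<Rightarrow> nat \<Rightarrow> nat \<Rightarrow> nat \<Rightarrow> 'k::comm_ring_1 mpoly4" where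
  "symm a b c d = mono a b c d + mono b a d c"

lemma mono_add: "mono (a+a') (b+b') (c+c') (d+d') = (mono a b c d * mono a' b' c' d' :: 'k::comm_ring_1 mpoly4)"
  by (simp add: mono_def power_add ac_simps)

lemma symm_mult: "(symm a b c d * symm a' b' c' d' :: 'k::comm_ring_1 mpoly4) =
   symm (a+a') (b+b') (c+c') (d+d') + symm (a+b') (b+a') (c+d') (d+c')"
proof -
  have e1: "mono (a+a') (b+b') (c+c') (d+d') = (mono a b c d * mono a' b' c' d' :: 'k mpoly4)" by (rule mono_add)
  have e2: "mono (b+b') (a+a') (d+d') (c+c') = (mono b a d c * mono b' a' d' c' :: 'k mpoly4)" by (rule mono_add)
  have e3: "mono (a+b') (b+a') (c+d') (d+c') = (mono a b c d * mono b' a' d' c' :: 'k mpoly4)" by (rule mono_add)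
  have e4: "mono (b+a') (a+b') (d+c') (c+d') = (mono b a d c * mono a' b' c' d' :: 'k mpoly4)" by (rule mono_add)
  show ?thesis unfolding symm_def e1 e2 e3 e4 by (simp add: algebra_simps)
qed

lemma symm_x: "symm (Suc a) (Suc b) c d = (Var X1 * Var X2) * (symm a b c d :: 'k::comm_ring_1 mpoly4)"
  by (simp add: symm_def mono_def algebra_simps)

lemma symm_y: "symm a b (Suc c) (Suc d) = (Var Y1 * Var Y2) * (symm a b c d :: 'k::comm_ring_1 mpoly4)"
  by (simp add: symm_def mono_def algebra_simps)

lemma symm_swap: "symm a b c d = symm b a d c"
  by (simp add: symm_def add.commute)

lemma ga_diff: "f \<in> gen_alg G \<Longrightarrow> h \<in> gen_alg G \<Longrightarrow> f - h \<in> gen_alg G"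
proof -
  assume f: "f \<in> gen_alg G" and h: "h \<in> gen_alg G"
  have "Const (-1) * h \<in> gen_alg G" by (rule ga_mult[OF ga_const h])
  then have "f + Const (-1) * h \<in> gen_alg G" by (rule ga_add[OF f])
  then show ?thesis by (simp add: Const_uminus)
qed

lemma ga_sum: "(\<And>i. i \<in> I \<Longrightarrow> f i \<in> gen_alg G) \<Longrightarrow> (\<Sum>i\<in>I. f i) \<in> gen_alg G"
proof (induct I rule: infinite_finite_induct)
  case (infinite A) then show ?case using ga_const[of 0] by simp
next
  case empty then show ?case using ga_const[of 0] by simp
next
  case (insert x F) then show ?case by (simp add: ga_add)
qed

lemma symm_in_gen:
  fixes G :: "'k::comm_ring_1 mpoly4 set"
  assumes q2: "q \<ge> 2"
    and gx: "Var X1 * Var X2 \<in> G" and gy: "Var Y1 * Var Y2 \<in> G"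
    and gxy: "Var X1 * Var Y1 + Var X2 * Var Y2 \<in> G"
    and gp: "\<And>a d. a + d = q \<Longrightarrow> symm a 0 0 d \<in> G"
    and dv: "int q dvd int a + int d - int b - int c"
  shows "symm a b c d \<in> gen_alg G"
proof -
  have "\<forall>a b c d. a+b+c+d = n \<longrightarrow> int q dvd int a + int d - int b - int c \<longrightarrow> symm a b c d \<in> gen_alg G" for n
  proof (induction n rule: less_induct)
    case (less n)
    have IH: "symm a b c d \<in> gen_alg G" if "a+b+c+d < n" "int q dvd int a + int d - int b - int c" for a b c d
      using less that by blast
    have red: "symm a b c d \<in> gen_alg G"
      if s: "a+b+c+d = n" and w: "int q dvd int a + int d - int b - int c" and r: "(a\<ge>1 \<and> b\<ge>1) \<or> (c\<ge>1 \<and> d\<ge>1)" for a b c d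
    proof (cases "a\<ge>1 \<and> b\<ge>1")
      case True
      then obtain a' b' where ab: "a = Suc a'" "b = Suc b'" by (metis Suc_le_D One_nat_def)
      have ee: "int a' + int d - int b' - int c = int a + int d - int b - int c" using ab by simp
      have "symm a' b' c d \<in> gen_alg G"
        by (rule IH) (use s ab in simp, unfold ee, rule w)
      then show ?thesis unfolding ab symm_x by (rule ga_mult[OF ga_gen[OF gx]])
    next
      case False
      then have "c\<ge>1 \<and> d\<ge>1" using r by blast
      then obtain c' d' where cd: "c = Suc c'" "d = Suc d'" by (metis Suc_le_D One_nat_def)
      have ee: "int a + int d' - int b - int c' = int a + int d - int b - int c" using cd by simp
      have "symm a b c' d' \<in> gen_alg G"
        by (rule IH) (use s cd in simp, unfold ee, rule w)
      then show ?thesis unfolding cd symm_y by (rule ga_mult[OF ga_gen[OF gy]])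
    qed
    have A: "symm a 0 0 d \<in> gen_alg G" if s: "a + d = n" and w: "int q dvd int a + int d" for a d
    proof -
      have "q dvd a + d" using w by (metis of_nat_add of_nat_dvd_iff)
      then obtain k where k: "a + d = q * k" by blast
      have split: "symm a 0 0 d \<in> gen_alg G"
        if sp: "a = a1+a2" "d = d1+d2" "a1+d1 = q" "(a1\<ge>1\<and>a2\<ge>1)\<or>(d1\<ge>1\<and>d2\<ge>1)" for a1 a2 d1 d2
      proof -
        have e: "symm a1 0 0 d1 * symm a2 0 0 d2 = symm a 0 0 d + (symm a1 a2 d2 d1 :: 'k mpoly4)"
          using symm_mult[of a1 0 0 d1 a2 0 0 d2] sp by simp
        have m1: "symm a1 0 0 d1 \<in> gen_alg G" using gp[OF sp(3)] by (rule ga_gen)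
        have i2: "int a2 + int d2 - int 0 - int 0 = (int a + int d) - int q" using sp by simp
        have w2: "int q dvd int a2 + int d2 - int 0 - int 0"
          unfolding i2 by (rule dvd_diff[OF w dvd_refl])
        have s2: "a2 + 0 + 0 + d2 < n" using sp s q2 by simp
        have m2: "symm a2 0 0 d2 \<in> gen_alg G" by (rule IH[OF s2 w2])
        have i3: "int a1 + int d1 - int a2 - int d2 = 2 * int q - (int a + int d)" using sp by simp
        have w3: "int q dvd int a1 + int d1 - int a2 - int d2"
          unfolding i3 by (rule dvd_diff[OF dvd_mult[OF dvd_refl] w])
        have s3: "a1 + a2 + d2 + d1 = n" using sp s by simp
        have c3: "(a1\<ge>1 \<and> a2\<ge>1) \<or> (d2\<ge>1 \<and> d1\<ge>1)" using sp by auto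
        have m3: "symm a1 a2 d2 d1 \<in> gen_alg G" by (rule red[OF s3 w3 c3])
        have "symm a 0 0 d = symm a1 0 0 d1 * symm a2 0 0 d2 - (symm a1 a2 d2 d1 :: 'k mpoly4)"
          using e by simp
        then show ?thesis using ga_diff[OF ga_mult[OF m1 m2] m3] by simp
      qed
      consider "k = 0" | "k = 1" | "k \<ge> 2" by linarith
      then show ?thesis
      proof cases
        case 1
        then have "a = 0" "d = 0" using k by auto
        then have "symm a 0 0 d = (Const 2 :: 'k mpoly4)"
          by (simp add: symm_def mono_def Const_def)
        then show ?thesis using ga_const by metis
      next
        case 2
        then show ?thesis using gp[of a d] k by (simp add: ga_gen)
      next
        case 3
        then have big: "a + d \<ge> 2 * q" using k by (metis mult.commute mult_le_mono1)
        consider "a > q" | "d > q" | "a = q" "d = q" using big by linarith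
        then show ?thesis
        proof cases
          case 1 then show ?thesis using q2 by (intro split[of q "a - q" 0 d]) auto
        next
          case 2 then show ?thesis using q2 by (intro split[of 0 a q "d - q"]) auto
        next
          case 3 then show ?thesis using q2 by (intro split[of "q - 1" 1 1 "q - 1"]) auto
        qed
      qed
    qed
    have B: "symm a 0 c 0 \<in> gen_alg G" if s: "a + c = n" and w: "int q dvd int a - int c" for a c
    proof -
      consider "c = 0" | "a = 0" | "a \<ge> 1" "c \<ge> 1" by linarith
      then show ?thesis
      proof cases
        case 1 then show ?thesis using A[of a 0] s w by simp
      next
        case 2
        have "(symm 0 0 c 0 :: 'k mpoly4) = symm 0 0 0 c" by (rule symm_swap)
        moreover have "symm 0 0 0 c \<in> gen_alg G" by (rule A) (use 2 s w in auto)
        ultimately show ?thesis using 2 by simp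
      next
        case 3
        then obtain a' c' where ac: "a = Suc a'" "c = Suc c'" by (metis Suc_le_D One_nat_def)
        show ?thesis
        proof (cases "a' = 0 \<and> c' = 0")
          case True
          then have "symm a 0 c 0 = Var X1 * Var Y1 + Var X2 * Var Y2"
            using ac by (simp add: symm_def mono_def)
          then show ?thesis using gxy ga_gen by metis
        next
          case False
          have e: "symm 1 0 1 0 * symm a' 0 c' 0 = symm a 0 c 0 + (symm 1 a' 1 c' :: 'k mpoly4)"
            using symm_mult[of 1 0 1 0 a' 0 c' 0] ac by simp
          have m1: "symm 1 0 1 0 \<in> gen_alg G"
          proof -
            have "symm 1 0 1 0 = Var X1 * Var Y1 + Var X2 * Var Y2"
              by (simp add: symm_def mono_def)
            then show ?thesis using gxy ga_gen by metis
          qed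
          have ee: "int a' + int 0 - int 0 - int c' = int a - int c" using ac by simp
          have m2: "symm a' 0 c' 0 \<in> gen_alg G"
            by (rule IH) (use s ac in simp, unfold ee, rule w)
          have i3: "int 1 + int c' - int a' - int 1 = - (int a - int c)" using ac by simp
          have w3: "int q dvd int 1 + int c' - int a' - int 1"
            unfolding i3 by (rule dvd_minus_iff[THEN iffD2, OF w])
          have s3: "1 + a' + 1 + c' = n" using s ac by simp
          have c3: "(1\<ge>(1::nat) \<and> a'\<ge>1) \<or> (1\<ge>(1::nat) \<and> c'\<ge>1)" using False by auto
          have m3: "symm 1 a' 1 c' \<in> gen_alg G" by (rule red[OF s3 w3 c3])
          have "symm a 0 c 0 = symm 1 0 1 0 * symm a' 0 c' 0 - (symm 1 a' 1 c' :: 'k mpoly4)"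
            using e by simp
          then show ?thesis using ga_diff[OF ga_mult[OF m1 m2] m3] by simp
        qed
      qed
    qed
    show ?case
    proof (intro allI impI)
      fix a b c d
      assume s: "a+b+c+d = n" and w: "int q dvd int a + int d - int b - int c"
      show "symm a b c d \<in> gen_alg G"
      proof (cases "(a\<ge>1 \<and> b\<ge>1) \<or> (c\<ge>1 \<and> d\<ge>1)")
        case True then show ?thesis using red s w by blast
      next
        case False
        then consider "b = 0" "c = 0" | "b = 0" "d = 0" | "a = 0" "c = 0" | "a = 0" "d = 0" by linarith
        then show ?thesis
        proof cases
          case 1 then show ?thesis using A[of a d] s w by simp
        next
          case 2 then show ?thesis using B[of a c] s w by simp
        next
          case 3
          have ee: "int b - int d = - (int a + int d - int b - int c)" using 3 by simp
          have w': "int q dvd int b - int d" unfolding ee by (rule dvd_minus_iff[THEN iffD2, OF w])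
          have "symm b 0 d 0 \<in> gen_alg G" by (rule B[OF _ w']) (use s 3 in simp)
          moreover have "(symm 0 b 0 d :: 'k mpoly4) = symm b 0 d 0" by (rule symm_swap)
          ultimately show ?thesis using 3 by simp
        next
          case 4
          have ee: "int b + int c = - (int a + int d - int b - int c)" using 4 by simp
          have w': "int q dvd int b + int c" unfolding ee by (rule dvd_minus_iff[THEN iffD2, OF w])
          have "symm b 0 0 c \<in> gen_alg G" by (rule A[OF _ w']) (use s 4 in simp)
          moreover have "(symm 0 b c 0 :: 'k mpoly4) = symm b 0 0 c" by (rule symm_swap)
          ultimately show ?thesis using 4 by simp
        qed
      qed
    qed
  qed
  then show ?thesis using dv by blast
qed




definition Sset :: "'k::field mat2 set" where
  "Sset = {(c,0,0,inverse c) | c. c \<noteq> 0} \<union> {(0,c,inverse c,0) | c. c \<noteq> 0}"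

lemma diag_in: "(c::'k::field) \<noteq> 0 \<Longrightarrow> (c,0,0,inverse c) \<in> Sset" by (auto simp: Sset_def)
lemma anti_in: "(c::'k::field) \<noteq> 0 \<Longrightarrow> (0,c,inverse c,0) \<in> Sset" by (auto simp: Sset_def)

lemma gens_mult_S:
  assumes s: "s \<in> O2_gens" and g: "g \<in> (Sset :: 'k::field mat2 set)"
  shows "m2mult s g \<in> Sset"
proof -
  from s consider "s = (0,1,1,0)" | c where "s = (c,0,0,inverse c)" "c \<noteq> 0"
    unfolding O2_gens_def by blast
  then show ?thesis
  proof cases
    case 1
    from g consider e where "g = (e,0,0,inverse e)" "e \<noteq> 0" | e where "g = (0,e,inverse e,0)" "e \<noteq> 0"
      unfolding Sset_def by blast
    then show ?thesis
    proof cases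
      case 1
      then have eq: "m2mult s g = (0, inverse e, inverse (inverse e), 0)" using \<open>s = _\<close> by simp
      show ?thesis unfolding eq by (rule anti_in) (use 1 in simp)
    next
      case 2
      then have eq: "m2mult s g = (inverse e, 0, 0, inverse (inverse e))" using \<open>s = _\<close> by simp
      show ?thesis unfolding eq by (rule diag_in) (use 2 in simp)
    qed
  next
    case 2
    from g consider e where "g = (e,0,0,inverse e)" "e \<noteq> 0" | e where "g = (0,e,inverse e,0)" "e \<noteq> 0"
      unfolding Sset_def by blast
    then show ?thesis
    proof cases
      case 1
      then have eq: "m2mult s g = (c*e, 0, 0, inverse (c*e))" using 2 by simp
      show ?thesis unfolding eq by (rule diag_in) (use 1 2 in simp)
    next
      case 3: 2
      then have eq: "m2mult s g = (0, c*e, inverse (c*e), 0)" using 2 by simp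
      show ?thesis unfolding eq by (rule anti_in) (use 3 2 in simp)
    qed
  qed
qed

lemma gens_inv: "s \<in> (O2_gens :: 'k::field mat2 set) \<Longrightarrow> m2inv s \<in> O2_gens"
proof -
  assume s: "s \<in> O2_gens"
  then consider "s = (0,1,1,0)" | c where "s = (c,0,0,inverse c)" "c \<noteq> 0"
    unfolding O2_gens_def by blast
  then show ?thesis
  proof cases
    case 1 then show ?thesis by (simp add: O2_gens_def Let_def)
  next
    case 2
    then have eq: "m2inv s = (inverse c, 0, 0, inverse (inverse c))" by (simp add: Let_def)
    show ?thesis unfolding eq O2_gens_def using 2 by auto
  qed
qed

lemma O2plus_sub: "(O2plus :: 'k::field mat2 set) \<subseteq> Sset"
proof
  fix g :: "'k mat2" assume "g \<in> O2plus"
  then show "g \<in> Sset" unfolding O2plus_def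
  proof (induct rule: gen_group.induct)
    case gg_id
    have "(m2id :: 'k mat2) = (1,0,0,inverse 1)" by (simp add: m2id_def)
    show ?case unfolding \<open>m2id = _\<close> by (rule diag_in) simp
  next
    case (gg_mult s g) then show ?case by (blast intro: gens_mult_S)
  next
    case (gg_inv s g) then show ?case using gens_mult_S gens_inv by blast
  qed
qed

lemma gens_in_O2plus: "s \<in> O2_gens \<Longrightarrow> s \<in> O2plus"
proof -
  assume s: "s \<in> O2_gens"
  have "m2mult s m2id \<in> gen_group O2_gens" by (rule gg_mult[OF s gg_id])
  moreover have "m2mult s m2id = s" by (cases s) (simp add: m2id_def)
  ultimately show ?thesis by (simp add: O2plus_def)
qed

lemma act_add: "act g (P + Q) = act g P + act g Q" by (simp add: act_def subst_add)
lemma act_mult: "act g (P * Q) = act g P * act g Q" by (simp add: act_def subst_mult)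
lemma act_Const: "act g (Const c) = Const c" by (simp add: act_def subst_Const)
lemma act_Var: "act g (Var v) = act_subst g v" by (simp add: act_def subst_Var)
lemma act_power: "act g (P ^ n) = act g P ^ n" by (simp add: act_def subst_power)

lemma powConst: "(Const a * V) ^ n = Const (a ^ n) * (V ^ n :: 'k::comm_ring_1 mpoly4)"
  by (simp add: power_mult_distrib Const_power)

lemma cmul: "a * b = 1 \<Longrightarrow> Const a * U * (Const b * V) = U * (V :: 'k::comm_ring_1 mpoly4)"
proof -
  assume "a * b = 1"
  have "Const a * U * (Const b * V) = Const (a * b) * (U * V)" by (simp add: Const_mult ac_simps)
  then show ?thesis using \<open>a * b = 1\<close> by simp
qed

lemma act_diag_vars:
  assumes "(c::'k::field) \<noteq> 0"
  shows "act_subst (c,0,0,inverse c) X1 = Const c * Var X1"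
    "act_subst (c,0,0,inverse c) X2 = Const (inverse c) * Var X2"
    "act_subst (c,0,0,inverse c) Y1 = Const (inverse c) * Var Y1"
    "act_subst (c,0,0,inverse c) Y2 = Const c * Var Y2"
  using assms by (simp_all add: divide_inverse)

lemma act_anti_vars:
  assumes "(c::'k::field) \<noteq> 0"
  shows "act_subst (0,c,inverse c,0) X1 = Const c * Var X2"
    "act_subst (0,c,inverse c,0) X2 = Const (inverse c) * Var X1"
    "act_subst (0,c,inverse c,0) Y1 = Const (inverse c) * Var Y2"
    "act_subst (0,c,inverse c,0) Y2 = Const c * Var Y1"
  using assms by (simp_all add: divide_inverse)

lemma pow_pair:
  assumes "(c::'k::{field,finite}) \<noteq> 0" "i \<le> CARD('k) - 1"
  shows "c ^ (CARD('k) - 1 - i) * c ^ i = 1"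
proof -
  have "c ^ (CARD('k) - 1 - i) * c ^ i = c ^ (CARD('k) - 1 - i + i)" by (simp add: power_add)
  also have "CARD('k) - 1 - i + i = CARD('k) - 1" using assms(2) by simp
  finally show ?thesis using pow_card_minus_one[OF assms(1)] by simp
qed

lemma gen_invariant:
  fixes g :: "'k::{field,finite} mat2"
  assumes g: "g \<in> Sset"
    and f: "f \<in> {Var X1 * Var X2, Var Y1 * Var Y2, Var X1 * Var Y1 + Var X2 * Var Y2} \<union>
                  {Var X1 ^ (CARD('k) - 1 - i) * Var Y2 ^ i + Var X2 ^ (CARD('k) - 1 - i) * Var Y1 ^ i
                   | i. i \<le> CARD('k) - 1}"
  shows "act g f = f"
proof -
  from g consider c where "g = (c,0,0,inverse c)" "c \<noteq> 0" | c where "g = (0,c,inverse c,0)" "c \<noteq> 0"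
    unfolding Sset_def by blast
  then show ?thesis
  proof cases
    case 1
    have vs: "act g (Var X1) = Const c * Var X1" "act g (Var X2) = Const (inverse c) * Var X2"
      "act g (Var Y1) = Const (inverse c) * Var Y1" "act g (Var Y2) = Const c * Var Y2"
      unfolding act_Var 1(1) by (rule act_diag_vars[OF 1(2)])+
    have ci: "c * inverse c = 1" "inverse c * c = 1" using 1 by simp_all
    from f consider "f = Var X1 * Var X2" | "f = Var Y1 * Var Y2" | "f = Var X1 * Var Y1 + Var X2 * Var Y2"
      | i where "f = Var X1 ^ (CARD('k) - 1 - i) * Var Y2 ^ i + Var X2 ^ (CARD('k) - 1 - i) * Var Y1 ^ i" "i \<le> CARD('k) - 1"
      by blast
    then show ?thesis
    proof cases
      case 1 then show ?thesis by (simp add: act_mult vs cmul ci)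
    next
      case 2 then show ?thesis by (simp add: act_mult vs cmul ci)
    next
      case 3 then show ?thesis by (simp add: act_add act_mult vs cmul ci)
    next
      case 4
      define n where "n = CARD('k) - 1 - i"
      have f': "f = Var X1 ^ n * Var Y2 ^ i + Var X2 ^ n * Var Y1 ^ i" unfolding n_def by (rule 4(1))
      have p1: "c ^ n * c ^ i = 1" unfolding n_def by (rule pow_pair[OF 1(2) 4(2)])
      have p2: "inverse c ^ n * inverse c ^ i = 1" unfolding n_def by (rule pow_pair) (use 1(2) 4(2) in auto)
      show ?thesis unfolding f' by (simp add: act_add act_mult act_power vs powConst cmul[OF p1] cmul[OF p2])
    qed
  next
    case 2
    have vs: "act g (Var X1) = Const c * Var X2" "act g (Var X2) = Const (inverse c) * Var X1"
      "act g (Var Y1) = Const (inverse c) * Var Y2" "act g (Var Y2) = Const c * Var Y1"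
      unfolding act_Var 2(1) by (rule act_anti_vars[OF 2(2)])+
    have ci: "c * inverse c = 1" "inverse c * c = 1" using 2 by simp_all
    from f consider "f = Var X1 * Var X2" | "f = Var Y1 * Var Y2" | "f = Var X1 * Var Y1 + Var X2 * Var Y2"
      | i where "f = Var X1 ^ (CARD('k) - 1 - i) * Var Y2 ^ i + Var X2 ^ (CARD('k) - 1 - i) * Var Y1 ^ i" "i \<le> CARD('k) - 1"
      by blast
    then show ?thesis
    proof cases
      case 1 then show ?thesis by (simp add: act_mult vs cmul ci; simp add: ac_simps)
    next
      case 2 then show ?thesis by (simp add: act_mult vs cmul ci; simp add: ac_simps)
    next
      case 3 then show ?thesis by (simp add: act_add act_mult vs cmul ci; simp add: ac_simps)
    next
      case 4
      define n where "n = CARD('k) - 1 - i"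
      have f': "f = Var X1 ^ n * Var Y2 ^ i + Var X2 ^ n * Var Y1 ^ i" unfolding n_def by (rule 4(1))
      have p1: "c ^ n * c ^ i = 1" unfolding n_def by (rule pow_pair[OF 2(2) 4(2)])
      have p2: "inverse c ^ n * inverse c ^ i = 1" unfolding n_def by (rule pow_pair) (use 2(2) 4(2) in auto)
      show ?thesis unfolding f' by (simp add: act_add act_mult act_power vs powConst cmul[OF p1] cmul[OF p2] add.commute)
    qed
  qed
qed

lemma alg_invariant:
  fixes g :: "'k::{field,finite} mat2"
  assumes g: "g \<in> Sset"
  shows "P \<in> gen_alg ({Var X1 * Var X2, Var Y1 * Var Y2, Var X1 * Var Y1 + Var X2 * Var Y2} \<union>
                  {Var X1 ^ (CARD('k) - 1 - i) * Var Y2 ^ i + Var X2 ^ (CARD('k) - 1 - i) * Var Y1 ^ i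
                   | i. i \<le> CARD('k) - 1}) \<Longrightarrow> act g P = P"
proof (induct rule: gen_alg.induct)
  case (ga_const c) then show ?case by (rule act_Const)
next
  case (ga_gen f) then show ?case by (rule gen_invariant[OF g])
next
  case (ga_add f h) then show ?case by (simp add: act_add)
next
  case (ga_mult f h) then show ?case by (simp add: act_mult)
qed




lemma lookup_sum_single:
  assumes "finite K" "m0 \<in> K"
  shows "Poly_Mapping.lookup (\<Sum>m\<in>K. Poly_Mapping.single m (f m)) m0 = f m0"
  using assms by (simp add: lookup_sum lookup_single when_def)

lemma T_diag:
  assumes c: "(c::'k::field) \<noteq> 0"
  shows "T (act_subst (c,0,0,inverse c)) m =
    Const (c ^ Poly_Mapping.lookup m X1 * inverse c ^ Poly_Mapping.lookup m X2 *
           inverse c ^ Poly_Mapping.lookup m Y1 * c ^ Poly_Mapping.lookup m Y2) * Poly_Mapping.single m 1"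
  unfolding T_explicit act_diag_vars[OF c] mono_single powConst by (simp add: Const_mult ac_simps)

lemma T_xi:
  "T (act_subst ((0,1,1,0)::'k::field mat2)) m =
    mono (Poly_Mapping.lookup m X2) (Poly_Mapping.lookup m X1) (Poly_Mapping.lookup m Y2) (Poly_Mapping.lookup m Y1)"
  unfolding T_explicit by (simp add: mono_def ac_simps)

lemma act_diag_P:
  assumes c: "(c::'k::field) \<noteq> 0"
  shows "act (c,0,0,inverse c) P = (\<Sum>m\<in>Poly_Mapping.keys P. Poly_Mapping.single m (Poly_Mapping.lookup P m *
     (c ^ Poly_Mapping.lookup m X1 * inverse c ^ Poly_Mapping.lookup m X2 *
           inverse c ^ Poly_Mapping.lookup m Y1 * c ^ Poly_Mapping.lookup m Y2)))"
proof -
  show ?thesis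
    unfolding act_def
    apply (subst poly_sum_single[symmetric, of P])
    apply (simp only: subst_sum subst_single T_diag[OF c] mult.assoc[symmetric] Const_mult_single flip: Const_mult)
    apply (rule sum.cong)
     apply simp
    apply (simp add: mult.assoc)
    done
qed

lemma pow_eq_dvd:
  assumes "\<And>c::'k::{field,finite}. c \<noteq> 0 \<Longrightarrow> c ^ e1 = c ^ e2"
  shows "int (CARD('k) - 1) dvd int e1 - int e2"
proof (cases "e2 \<le> e1")
  case True
  have "(CARD('k) - 1) dvd (e1 - e2)"
  proof (rule pow_all_one_dvd)
    fix c :: 'k assume c: "c \<noteq> 0"
    have "c ^ (e1 - e2) * c ^ e2 = c ^ (e1 - e2 + e2)" by (simp add: power_add)
    also have "e1 - e2 + e2 = e1" using True by simp
    also have "c ^ e1 = c ^ e2" using assms[OF c] by simp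
    finally have "c ^ (e1 - e2) * c ^ e2 = c ^ e2" .
    then show "c ^ (e1 - e2) = 1" using c by simp
  qed
  then have "int (CARD('k) - 1) dvd int (e1 - e2)" by (simp only: of_nat_dvd_iff)
  then show ?thesis using True by (simp add: of_nat_diff)
next
  case False
  have "(CARD('k) - 1) dvd (e2 - e1)"
  proof (rule pow_all_one_dvd)
    fix c :: 'k assume c: "c \<noteq> 0"
    have "c ^ (e2 - e1) * c ^ e1 = c ^ (e2 - e1 + e1)" by (simp add: power_add)
    also have "e2 - e1 + e1 = e2" using False by simp
    also have "c ^ e2 = c ^ e1" using assms[OF c] by simp
    finally have "c ^ (e2 - e1) * c ^ e1 = c ^ e1" .
    then show "c ^ (e2 - e1) = 1" using c by simp
  qed
  then have "int (CARD('k) - 1) dvd int (e2 - e1)" by (simp only: of_nat_dvd_iff)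
  then have "int (CARD('k) - 1) dvd - (int e1 - int e2)" using False by (simp add: of_nat_diff)
  then show ?thesis by (simp only: dvd_minus_iff)
qed




theorem theorem1p2:
  assumes "prime CARD('k::{field,finite})" and "odd CARD('k)"
  shows "{P :: 'k mpoly4. \<forall>g\<in>O2plus. act g P = P} =
         gen_alg ({Var X1 * Var X2, Var Y1 * Var Y2, Var X1 * Var Y1 + Var X2 * Var Y2} \<union>
                  {Var X1 ^ (CARD('k) - 1 - i) * Var Y2 ^ i + Var X2 ^ (CARD('k) - 1 - i) * Var Y1 ^ i
                   | i. i \<le> CARD('k) - 1})"
    (is "?L = gen_alg ?G")
proof
  show "gen_alg ?G \<subseteq> ?L"
  proof
    fix P assume P: "P \<in> gen_alg ?G"
    have "act g P = P" if "g \<in> O2plus" for g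
      using alg_invariant[OF subsetD[OF O2plus_sub that] P] .
    then show "P \<in> ?L" by blast
  qed
next
  show "?L \<subseteq> gen_alg ?G"
  proof
    fix P :: "'k mpoly4" assume "P \<in> ?L"
    then have inv: "\<And>g. g \<in> O2plus \<Longrightarrow> act g P = P" by blast
    define q where "q = CARD('k) - 1"
    define K where "K = Poly_Mapping.keys P"
    define L where "L = (\<lambda>m v. Poly_Mapping.lookup (m::var \<Rightarrow>\<^sub>0 nat) v)"
    have fK: "finite K" by (simp add: K_def)
    have p2: "2 \<le> CARD('k)" using assms(1) prime_ge_2_nat by blast
    have q2: "q \<ge> 2"
    proof -
      have "CARD('k) \<noteq> 2" using assms(2) by auto
      then show ?thesis using p2 by (simp add: q_def)
    qed
    have xi: "act (0,1,1,0) P = P" by (rule inv, rule gens_in_O2plus) (simp add: O2_gens_def)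
    have dg: "act (c,0,0,inverse c) P = P" if "c \<noteq> 0" for c
      by (rule inv, rule gens_in_O2plus) (use that in \<open>auto simp: O2_gens_def\<close>)
    have wt: "int q dvd int (L m X1) + int (L m Y2) - int (L m X2) - int (L m Y1)" if m: "m \<in> K" for m
    proof -
      have nz: "Poly_Mapping.lookup P m \<noteq> 0" using m by (simp add: K_def in_keys_iff)
      have "c ^ (L m X1 + L m Y2) = c ^ (L m X2 + L m Y1)" if c: "c \<noteq> 0" for c :: 'k
      proof -
        have "Poly_Mapping.lookup P m = Poly_Mapping.lookup (act (c,0,0,inverse c) P) m" using dg[OF c] by simp
        also have "\<dots> = Poly_Mapping.lookup P m * (c ^ L m X1 * inverse c ^ L m X2 * inverse c ^ L m Y1 * c ^ L m Y2)"
          unfolding act_diag_P[OF c] L_def using fK m unfolding K_def by (rule lookup_sum_single)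
        finally have w: "c ^ L m X1 * inverse c ^ L m X2 * inverse c ^ L m Y1 * c ^ L m Y2 = 1"
          using nz by simp
        have e1: "inverse c ^ k * c ^ k = 1" for k using c by (simp flip: power_mult_distrib)
        have "(c ^ L m X1 * inverse c ^ L m X2 * inverse c ^ L m Y1 * c ^ L m Y2) * (c ^ L m X2 * c ^ L m Y1)
           = c ^ L m X1 * c ^ L m Y2 * (inverse c ^ L m X2 * c ^ L m X2) * (inverse c ^ L m Y1 * c ^ L m Y1)"
          by (simp only: ac_simps)
        also have "\<dots> = c ^ (L m X1 + L m Y2)" by (simp only: e1 mult_1_right power_add)
        finally have "c ^ (L m X1 + L m Y2) = (c ^ L m X1 * inverse c ^ L m X2 * inverse c ^ L m Y1 * c ^ L m Y2) * (c ^ L m X2 * c ^ L m Y1)"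
          by simp
        also have "\<dots> = c ^ (L m X2 + L m Y1)" using w by (simp add: power_add)
        finally show ?thesis .
      qed
      then have "int q dvd int (L m X1 + L m Y2) - int (L m X2 + L m Y1)"
        unfolding q_def by (rule pow_eq_dvd)
      then show ?thesis by (simp add: algebra_simps)
    qed
    have Pexp: "P = (\<Sum>m\<in>K. Const (Poly_Mapping.lookup P m) * mono (L m X1) (L m X2) (L m Y1) (L m Y2))"
    proof -
      have "P = (\<Sum>m\<in>K. Poly_Mapping.single m (Poly_Mapping.lookup P m))"
        unfolding K_def by (rule poly_sum_single[symmetric])
      also have "\<dots> = (\<Sum>m\<in>K. Const (Poly_Mapping.lookup P m) * mono (L m X1) (L m X2) (L m Y1) (L m Y2))"
        by (rule sum.cong) (simp_all add: mono_def L_def flip: mono_single add: Const_mult_single)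
      finally show ?thesis .
    qed
    have Axi: "act (0,1,1,0) P = (\<Sum>m\<in>K. Const (Poly_Mapping.lookup P m) * mono (L m X2) (L m X1) (L m Y2) (L m Y1))"
    proof -
      have "act (0,1,1,0) P = subst (act_subst (0,1,1,0)) (\<Sum>m\<in>K. Poly_Mapping.single m (Poly_Mapping.lookup P m))"
        unfolding act_def K_def by (simp add: poly_sum_single)
      also have "\<dots> = (\<Sum>m\<in>K. Const (Poly_Mapping.lookup P m) * mono (L m X2) (L m X1) (L m Y2) (L m Y1))"
        by (simp add: subst_sum subst_single T_xi L_def)
      finally show ?thesis .
    qed
    have PP: "P + P = (\<Sum>m\<in>K. Const (Poly_Mapping.lookup P m) * symm (L m X1) (L m X2) (L m Y1) (L m Y2))"
    proof -
      have "P + P = P + act (0,1,1,0) P" using xi by simp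
      also have "\<dots> = (\<Sum>m\<in>K. Const (Poly_Mapping.lookup P m) * symm (L m X1) (L m X2) (L m Y1) (L m Y2))"
        by (subst Axi, subst (1) Pexp) (simp add: symm_def distrib_left sum.distrib)
      finally show ?thesis .
    qed
    have two: "(2::'k) \<noteq> 0" by (rule two_ne_zero_field[OF assms(2)])
    have c2: "Const (2::'k) = 2" by (simp add: Const_def)
    have c2P: "Const 2 * P = P + P" unfolding c2 by (rule mult_2)
    have i2: "inverse (2::'k) * 2 = 1" by (rule left_inverse[OF two])
    have Phalf: "P = Const (inverse 2) * (P + P)"
    proof -
      have "Const (inverse 2) * (P + P) = Const (inverse 2) * (Const 2 * P)"
        by (simp only: c2P)
      also have "\<dots> = Const (inverse 2 * 2) * P" by (simp only: Const_mult mult.assoc)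
      also have "\<dots> = P" by (simp only: i2 Const_1 mult_1_left)
      finally show ?thesis by (rule sym)
    qed
    have gx: "Var X1 * Var X2 \<in> ?G" and gy: "Var Y1 * Var Y2 \<in> ?G"
      and gxy: "Var X1 * Var Y1 + Var X2 * Var Y2 \<in> ?G" by simp_all
    have gp: "symm a 0 0 d \<in> ?G" if ad: "a + d = q" for a d
    proof -
      have a: "a = CARD('k) - 1 - d" using ad by (simp add: q_def)
      have eq: "symm a 0 0 d = Var X1 ^ (CARD('k) - 1 - d) * Var Y2 ^ d + Var X2 ^ (CARD('k) - 1 - d) * Var Y1 ^ d"
        unfolding a by (simp add: symm_def mono_def)
      have dle: "d \<le> CARD('k) - 1" using ad by (simp add: q_def)
      show ?thesis unfolding eq by (rule UnI2, rule CollectI, rule exI[of _ d], rule conjI[OF refl dle])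
    qed
    have terms: "Const (Poly_Mapping.lookup P m) * symm (L m X1) (L m X2) (L m Y1) (L m Y2) \<in> gen_alg ?G"
      if m: "m \<in> K" for m
      by (rule ga_mult[OF ga_const symm_in_gen[OF q2 gx gy gxy gp wt[OF m]]])
    have "Const (inverse 2) * (P + P) \<in> gen_alg ?G"
      unfolding PP by (rule ga_mult[OF ga_const ga_sum[OF terms]])
    then show "P \<in> gen_alg ?G" unfolding Phalf[symmetric] .
  qed
qed


end
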